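(* Let $G$ be a finite simple connected graph on $n$ vertices with adjacency matrix $A$, and let $\mu_{\max}(A)=\mu_1\ge \mu_2\ge\cdots\ge\mu_n$ be the eigenvalues of $A$. For $i\in[n]$ write $\mu_i^\uparrow(A)=\mu_{n+1-i}$ for the $i$-th smallest eigenvalue. Let $\kappa$ be the smallest integer such that \[ 0\ \ge\ \mu_{\max}(A)+\sum_{i=1}^{\kappa}\mu_i^\uparrow(A). \] Then the quantum chromatic number of $G$ satisfies $\chi_q(G)\ge 1+\kappa$.
   Context: A quantum $c$-coloring of a graph $G=(V,E)$ is a collection of orthogonal projectors $\{P_{v,k}: v\in V, k\in[c]\}$ in $\mathbb{C}^{d\times d}$, for some integer $d>0$, such that $\sum_{k\in[c]}P_{v,k}=I_d$ for every vertex $v\in V$, and $P_{v,k}P_{w,k}=0_d$ for every edge $vw\in E$ and every $k\in[c]$. The quantum chromatic number $\chi_q(G)$ is the smallest $c$ for which $G$ admits a quantum $c$-coloring in some dimension $d>0$. *)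

theory Defs
  imports "Jordan_Normal_Form.Schur_Decomposition" "Jordan_Normal_Form.Char_Poly"
begin

definition simple_graph :: "nat \<Rightarrow> (nat \<Rightarrow> nat \<Rightarrow> bool) \<Rightarrow> bool" where
  "simple_graph n E \<longleftrightarrow> (\<forall>u v. E u v \<longrightarrow> u < n \<and> v < n) \<and> (\<forall>u v. E u v \<longrightarrow> E v u) \<and> (\<forall>u. \<not> E u u)"

definition connected_graph :: "nat \<Rightarrow> (nat \<Rightarrow> nat \<Rightarrow> bool) \<Rightarrow> bool" where
  "connected_graph n E \<longleftrightarrow> (\<forall>u<n. \<forall>v<n. E\<^sup>*\<^sup>* u v)"

definition adjacency_matrix :: "nat \<Rightarrow> (nat \<Rightarrow> nat \<Rightarrow> bool) \<Rightarrow> real mat" where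
  "adjacency_matrix n E = mat n n (\<lambda>(i,j). if E i j then 1 else 0)"

text \<open>Eigenvalues (with multiplicity) of a matrix whose characteristic polynomial splits,
  listed in ascending order: mu_asc ! (i-1) is the i-th smallest eigenvalue.\<close>
definition eigenvalues_asc :: "real mat \<Rightarrow> real list" where
  "eigenvalues_asc A = (THE es. sorted es \<and> char_poly A = (\<Prod>e\<leftarrow>es. [:- e, 1:]))"

definition mu_max :: "real mat \<Rightarrow> real" where
  "mu_max A = last (eigenvalues_asc A)"

definition orth_projector :: "nat \<Rightarrow> complex mat \<Rightarrow> bool" where
  "orth_projector d P \<longleftrightarrow> P \<in> carrier_mat d d \<and> P * P = P \<and> mat_adjoint P = P"

definition quantum_coloring ::
  "nat \<Rightarrow> (nat \<Rightarrow> nat \<Rightarrow> bool) \<Rightarrow> nat \<Rightarrow> nat \<Rightarrow> (nat \<Rightarrow> nat \<Rightarrow> complex mat) \<Rightarrow> bool" where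
  "quantum_coloring n E c d P \<longleftrightarrow>
     (\<forall>v<n. \<forall>k<c. orth_projector d (P v k)) \<and>
     (\<forall>v<n. foldr (\<lambda>k M. P v k + M) [0..<c] (0\<^sub>m d d) = 1\<^sub>m d) \<and>
     (\<forall>v w k. E v w \<longrightarrow> k < c \<longrightarrow> P v k * P w k = 0\<^sub>m d d)"

definition quantum_colorable :: "nat \<Rightarrow> (nat \<Rightarrow> nat \<Rightarrow> bool) \<Rightarrow> nat \<Rightarrow> bool" where
  "quantum_colorable n E c \<longleftrightarrow> (\<exists>d>0. \<exists>P. quantum_coloring n E c d P)"

definition quantum_chromatic_number :: "nat \<Rightarrow> (nat \<Rightarrow> nat \<Rightarrow> bool) \<Rightarrow> nat" where
  "quantum_chromatic_number n E = (LEAST c. quantum_colorable n E c)"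

end

theory Submission
  imports Defs
begin

definition diag_es :: "nat \<Rightarrow> complex list \<Rightarrow> complex mat" where
 "diag_es n es = mat n n (\<lambda>(i,j). if i = j then es ! i else 0)"

lemma adj_dim[simp]: "dim_row (mat_adjoint A) = dim_col A" "dim_col (mat_adjoint A) = dim_row A"
  unfolding mat_adjoint_def by auto

lemma adj_index[simp]: "i < dim_col A \<Longrightarrow> j < dim_row A \<Longrightarrow>
   mat_adjoint (A::complex mat) $$ (i,j) = cnj (A $$ (j,i))"
  unfolding mat_adjoint_def by (simp add: mat_of_rows_index)

lemma adj_carrier[simp]: "A \<in> carrier_mat m n \<Longrightarrow> mat_adjoint A \<in> carrier_mat n m"
  unfolding carrier_mat_def by auto

lemma adj_adj[simp]: "mat_adjoint (mat_adjoint (A::complex mat)) = A"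
  by (rule eq_matI, auto)

lemma adj_mult: assumes "(A::complex mat) \<in> carrier_mat m k" "B \<in> carrier_mat k n"
  shows "mat_adjoint (A * B) = mat_adjoint B * mat_adjoint A"
proof (rule eq_matI)
  fix i j assume "i < dim_row (mat_adjoint B * mat_adjoint A)" "j < dim_col (mat_adjoint B * mat_adjoint A)"
  then have ij: "i < n" "j < m" using assms by auto
  have "mat_adjoint (A * B) $$ (i,j) = cnj ((A*B) $$ (j,i))" using ij assms by auto
  also have "\<dots> = cnj (\<Sum>r<k. A $$ (j,r) * B $$ (r,i))"
    using ij assms by (auto simp: scalar_prod_def atLeast0LessThan)
  also have "\<dots> = (\<Sum>r<k. cnj (B $$ (r,i)) * cnj (A $$ (j,r)))"
    by (simp add: mult.commute)
  also have "\<dots> = (mat_adjoint B * mat_adjoint A) $$ (i,j)"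
    using ij assms by (auto simp: scalar_prod_def atLeast0LessThan)
  finally show "mat_adjoint (A * B) $$ (i, j) = (mat_adjoint B * mat_adjoint A) $$ (i, j)" .
qed (use assms in auto)

lemma adj_one[simp]: "mat_adjoint (1\<^sub>m n :: complex mat) = 1\<^sub>m n"
  by (rule eq_matI, auto)

lemma mult_idx: "A \<in> carrier_mat m k \<Longrightarrow> B \<in> carrier_mat k n \<Longrightarrow> i < m \<Longrightarrow> j < n \<Longrightarrow>
  (A * B) $$ (i,j) = (\<Sum>r<k. A $$ (i,r) * B $$ (r,j))"
  by (auto simp: scalar_prod_def atLeast0LessThan)

lemma mult_vec_idx: "A \<in> carrier_mat m k \<Longrightarrow> v \<in> carrier_vec k \<Longrightarrow> i < m \<Longrightarrow>
  (A *\<^sub>v v) $ i = (\<Sum>r<k. A $$ (i,r) * v $ r)"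
  by (auto simp: scalar_prod_def atLeast0LessThan)

lemma cnj_mult_self: "cnj z * z = complex_of_real ((cmod z)^2)"
  by (metis complex_norm_square mult.commute)

lemma hermitian_spectral:
  fixes H :: "complex mat"
  assumes "H \<in> carrier_mat n n" "mat_adjoint H = H" "char_poly H = (\<Prod>e\<leftarrow>es. [:-e,1:])"
  shows "\<exists>U. U \<in> carrier_mat n n \<and> mat_adjoint U * U = 1\<^sub>m n \<and> H * U = U * diag_es n es"
  using assms
proof (induct es arbitrary: n H)
  case Nil
  with degree_monic_char_poly[of H n] have n: "n = 0" by auto
  show ?case using Nil.prems(1) by (intro exI[of _ "1\<^sub>m n"]) (auto simp: n diag_es_def intro!: eq_matI)
next
  case (Cons e es n H)
  from Cons have H: "H \<in> carrier_mat n n" and herm: "mat_adjoint H = H" by auto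
  have cp: "char_poly H = [:-e,1:] * (\<Prod>e\<leftarrow>es. [:-e,1:])" using Cons(4) by simp
  have mon: "monic (\<Prod>e\<leftarrow>es. [:-e,1:])" by (rule monic_prod_list, auto)
  have deg: "degree (char_poly H) = Suc (degree (\<Prod>e\<leftarrow>es. [:-e,1:]))" unfolding cp
    by (subst degree_mult_eq, insert mon, auto)
  with degree_monic_char_poly[OF H] have n0: "n \<noteq> 0" by auto
  then obtain m where nm: "n = Suc m" by (cases n) auto
  have e: "eigenvalue H e" unfolding eigenvalue_root_char_poly[OF H] cp by simp
  define v where "v = find_eigenvector H e"
  from find_eigenvector[OF H e] have ev: "eigenvector H v e" unfolding v_def .
  hence v[simp]: "v \<in> carrier_vec n" and v0: "v \<noteq> 0\<^sub>v n" and Hv: "H *\<^sub>v v = e \<cdot>\<^sub>v v"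
    using H unfolding eigenvector_def by auto
  have Hv': "r < n \<Longrightarrow> (H *\<^sub>v v) $ r = e * v $ r" for r
  proof -
    assume r: "r < n"
    have dv: "dim_vec v = n" using v by auto
    show ?thesis unfolding Hv by (rule index_smult_vec(1)) (simp add: dv r)
  qed
  define b where "b = basis_completion v"
  define ws where "ws = gram_schmidt n b"
  interpret cof_vec_space n "TYPE(complex)" .
  from basis_completion[OF v v0, folded b_def]
  have dist_b: "distinct b" and indep: "\<not> lin_dep (set b)" and b: "set b \<subseteq> carrier_vec n"
    and hdb: "hd b = v" and len_b: "length b = n" by auto
  from hdb len_b n0 obtain vs where bv: "b = v # vs" by (cases b, auto)
  from gram_schmidt_result[OF b dist_b indep refl, folded ws_def]
  have ws: "set ws \<subseteq> carrier_vec n" "corthogonal ws" "length ws = n" by (auto simp: len_b)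
  from gram_schmidt_hd[OF v, of vs, folded bv] have hdws: "hd ws = v" unfolding ws_def .
  have ws0: "ws ! 0 = v" using hdws ws(3) n0 by (cases ws) auto
  have wsc: "i < n \<Longrightarrow> ws ! i \<in> carrier_vec n" for i using ws by auto
  define nrm where "nrm i = (\<Sum>r<n. (cmod (ws ! i $ r))^2)" for i
  have orth: "(\<Sum>r<n. cnj (ws ! i $ r) * ws ! j $ r) = (if i = j then complex_of_real (nrm i) else 0)"
    if ij: "i < n" "j < n" for i j
  proof -
    have *: "(ws ! j \<bullet>c ws ! i = 0) = (j \<noteq> i)" using ws(2) ij ws(3) unfolding corthogonal_def by auto
    have **: "ws ! j \<bullet>c ws ! i = (\<Sum>r<n. cnj (ws ! i $ r) * ws ! j $ r)"
      using wsc[OF ij(1)] wsc[OF ij(2)] by (auto simp: scalar_prod_def atLeast0LessThan mult.commute)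
    show ?thesis
    proof (cases "i = j")
      case True
      then show ?thesis unfolding nrm_def by (simp add: cnj_mult_self)
    next
      case False
      then show ?thesis using * ** by auto
    qed
  qed
  have nrm_pos: "nrm i > 0" if i: "i < n" for i
  proof -
    have "nrm i \<noteq> 0"
    proof
      assume "nrm i = 0"
      then have "complex_of_real (nrm i) = 0" by simp
      with orth[OF i i] have "ws ! i \<bullet>c ws ! i = 0"
        using wsc[OF i] by (auto simp: scalar_prod_def atLeast0LessThan mult.commute)
      then show False using ws(2) i ws(3) unfolding corthogonal_def by auto
    qed
    moreover have "nrm i \<ge> 0" unfolding nrm_def by (auto intro: sum_nonneg)
    ultimately show ?thesis by auto
  qed
  define \<alpha> where "\<alpha> i = 1 / sqrt (nrm i)" for i
  define W where "W = mat n n (\<lambda>(r,i). complex_of_real (\<alpha> i) * ws ! i $ r)"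
  have W: "W \<in> carrier_mat n n" unfolding W_def by auto
  have WW: "mat_adjoint W * W = 1\<^sub>m n"
  proof (rule eq_matI)
    fix i j assume "i < dim_row (1\<^sub>m n :: complex mat)" "j < dim_col (1\<^sub>m n :: complex mat)"
    then have ij: "i < n" "j < n" by auto
    have "(mat_adjoint W * W) $$ (i,j) = (\<Sum>r<n. cnj (W $$ (r,i)) * W $$ (r,j))"
      using W ij by (subst mult_idx[of _ n n]) auto
    also have "\<dots> = (\<Sum>r<n. complex_of_real (\<alpha> i * \<alpha> j) * (cnj (ws ! i $ r) * ws ! j $ r))"
      using ij unfolding W_def by (intro sum.cong) (auto simp: algebra_simps)
    also have "\<dots> = complex_of_real (\<alpha> i * \<alpha> j) * (\<Sum>r<n. cnj (ws ! i $ r) * ws ! j $ r)"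
      by (simp add: sum_distrib_left)
    also have "\<dots> = 1\<^sub>m n $$ (i,j)"
    proof (cases "i = j")
      case True
      have "\<alpha> i * \<alpha> i * nrm i = 1" using nrm_pos[OF ij(1)] unfolding \<alpha>_def
        by (simp add: field_simps)
      then show ?thesis using True ij orth[OF ij]
        by (metis index_one_mat(1) of_real_1 of_real_mult)
    qed (use ij orth in auto)
    finally show "(mat_adjoint W * W) $$ (i,j) = 1\<^sub>m n $$ (i,j)" .
  qed (use W in auto)
  have WW': "W * mat_adjoint W = 1\<^sub>m n"
    using mat_mult_left_right_inverse[OF adj_carrier[OF W] W WW] .
  have Hcol: "(\<Sum>s<n. H $$ (r,s) * W $$ (s,0)) = e * W $$ (r,0)" if r: "r < n" for r
  proof -
    have "(\<Sum>s<n. H $$ (r,s) * W $$ (s,0)) = complex_of_real (\<alpha> 0) * (\<Sum>s<n. H $$ (r,s) * v $ s)"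
      unfolding W_def ws0[symmetric] using n0 by (auto simp: sum_distrib_left algebra_simps intro!: sum.cong)
    also have "(\<Sum>s<n. H $$ (r,s) * v $ s) = (H *\<^sub>v v) $ r"
      using mult_vec_idx[OF H v r] by simp
    also have "\<dots> = e * v $ r" using Hv' r by simp
    finally show ?thesis unfolding W_def ws0[symmetric] using r n0 by simp
  qed
  define A' where "A' = mat_adjoint W * H * W"
  have A': "A' \<in> carrier_mat n n" unfolding A'_def using W H by auto
  have A'herm: "mat_adjoint A' = A'"
    unfolding A'_def using W H herm
    by (simp add: adj_mult[of _ n n _ n] assoc_mult_mat[of _ n n _ n _ n])
  have A'col: "A' $$ (i,0) = (if i = 0 then e else 0)" if i: "i < n" for i
  proof -
    have A'': "A' = mat_adjoint W * (H * W)" unfolding A'_def using W H by (simp add: assoc_mult_mat[of _ n n _ n _ n])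
    have "A' $$ (i,0) = (\<Sum>r<n. mat_adjoint W $$ (i,r) * (H * W) $$ (r,0))"
      unfolding A'' using W H i n0 by (subst mult_idx[of _ n n _ n]) auto
    also have "\<dots> = (\<Sum>r<n. mat_adjoint W $$ (i,r) * (\<Sum>s<n. H $$ (r,s) * W $$ (s,0)))"
      using W H i n0 by (intro sum.cong refl, subst mult_idx[of _ n n _ n]) auto
    also have "\<dots> = e * (\<Sum>r<n. cnj (W $$ (r,i)) * W $$ (r,0))"
      using Hcol W i by (auto simp: sum_distrib_left algebra_simps intro!: sum.cong)
    also have "(\<Sum>r<n. cnj (W $$ (r,i)) * W $$ (r,0)) = (mat_adjoint W * W) $$ (i,0)"
      using W i n0 by (subst mult_idx[of _ n n]) auto
    finally show ?thesis using WW i n0 by simp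
  qed
  have A'row: "A' $$ (0,j) = (if j = 0 then e else 0)" if j: "j < n" for j
  proof -
    have "A' $$ (0,j) = mat_adjoint A' $$ (0,j)" using A'herm by simp
    also have "\<dots> = cnj (A' $$ (j,0))" using A' j n0 by simp
    finally show ?thesis using A'col[OF j] A'col[of 0] n0 by (auto split: if_splits)
  qed
  define A3 where "A3 = mat m m (\<lambda>(i,j). A' $$ (Suc i, Suc j))"
  have A3: "A3 \<in> carrier_mat m m" unfolding A3_def by auto
  define E1 where "E1 = (mat 1 1 (\<lambda>_. e) :: complex mat)"
  have E1: "E1 \<in> carrier_mat 1 1" unfolding E1_def by auto
  have A'blk: "A' = four_block_mat E1 (0\<^sub>m 1 m) (0\<^sub>m m 1) A3"
    by (rule eq_matI) (use A' A'col A'row nm in \<open>auto simp: A3_def E1_def\<close>)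
  have A3herm: "mat_adjoint A3 = A3"
  proof (rule eq_matI)
    fix i j assume "i < dim_row A3" "j < dim_col A3"
    then have ij: "i < m" "j < m" using A3 by auto
    have "mat_adjoint A3 $$ (i,j) = cnj (A' $$ (Suc j, Suc i))" using ij A3 by (simp add: A3_def)
    also have "\<dots> = mat_adjoint A' $$ (Suc i, Suc j)" using ij A' nm by simp
    also have "\<dots> = A3 $$ (i,j)" using A'herm ij by (simp add: A3_def)
    finally show "mat_adjoint A3 $$ (i,j) = A3 $$ (i,j)" .
  qed (use A3 in auto)
  have sim: "similar_mat A' H"
    unfolding similar_mat_def similar_mat_wit_def Let_def
    by (rule exI[of _ "mat_adjoint W"], rule exI[of _ W]) (use A' H W WW WW' in \<open>auto simp: A'_def\<close>)
  have "char_poly A' = char_poly H" by (rule char_poly_similar[OF sim])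
  also have "char_poly A' = char_poly E1 * char_poly A3"
    unfolding A'blk by (rule char_poly_four_block_zeros_col[OF E1 _ A3]) auto
  also have "char_poly E1 = [:-e,1:]"
    by (simp add: E1_def char_poly_defs det_def sign_def)
  finally have cpA3: "char_poly A3 = (\<Prod>e\<leftarrow>es. [:-e,1:])"
    unfolding cp by (metis mult_cancel_left pCons_eq_0_iff zero_neq_one)
  from Cons(1)[OF A3 A3herm cpA3] obtain U3 where
    U3: "U3 \<in> carrier_mat m m" and U3U: "mat_adjoint U3 * U3 = 1\<^sub>m m"
    and A3U: "A3 * U3 = U3 * diag_es m es" by auto
  define B where "B = four_block_mat (1\<^sub>m 1) (0\<^sub>m 1 m) (0\<^sub>m m 1) U3"
  have B: "B \<in> carrier_mat n n" unfolding B_def using U3 nm by auto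
  have adjB: "mat_adjoint B = four_block_mat (1\<^sub>m 1) (0\<^sub>m 1 m) (0\<^sub>m m 1) (mat_adjoint U3)"
    by (rule eq_matI) (use U3 in \<open>auto simp: B_def\<close>)
  have BB: "mat_adjoint B * B = 1\<^sub>m n"
    unfolding adjB unfolding B_def
    by (subst mult_four_block_mat[of _ 1 1 _ m _ m]) (use U3 U3U nm in auto)
  define D' where "D' = diag_es m es"
  have D': "D' \<in> carrier_mat m m" unfolding D'_def diag_es_def by auto
  have Dblk: "diag_es n (e # es) = four_block_mat E1 (0\<^sub>m 1 m) (0\<^sub>m m 1) D'"
    by (rule eq_matI) (auto simp: nm diag_es_def D'_def E1_def)
  have A'B: "A' * B = B * diag_es n (e # es)"
    unfolding A'blk B_def Dblk
    by (subst mult_four_block_mat[of _ 1 1 _ m _ m], insert E1 A3 U3 D', auto,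
        subst mult_four_block_mat[of _ 1 1 _ m _ m], insert E1 A3 U3 D', auto simp: A3U D'_def)
  define U where "U = W * B"
  have U: "U \<in> carrier_mat n n" unfolding U_def using W B by auto
  have UU: "mat_adjoint U * U = 1\<^sub>m n"
  proof -
    have "mat_adjoint U * U = mat_adjoint B * (mat_adjoint W * (W * B))"
      unfolding U_def using W B by (simp add: adj_mult[of _ n n _ n] assoc_mult_mat[of _ n n _ n _ n])
    also have "mat_adjoint W * (W * B) = B"
      using assoc_mult_mat[of "mat_adjoint W" n n W n B n, symmetric] WW W B by simp
    finally show ?thesis using BB by simp
  qed
  have HU: "H * U = U * diag_es n (e # es)"
  proof -
    have "H * U = 1\<^sub>m n * (H * (W * B))" using H W B by (simp add: U_def)
    also have "\<dots> = (W * mat_adjoint W) * (H * (W * B))" using WW' by simp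
    also have "\<dots> = W * (mat_adjoint W * (H * (W * B)))" by (rule assoc_mult_mat) (use W H B in auto)
    also have "mat_adjoint W * (H * (W * B)) = A' * B"
      unfolding A'_def using W H B by (simp add: assoc_mult_mat[of _ n n _ n _ n])
    finally have "H * U = W * (A' * B)" .
    also have "\<dots> = U * diag_es n (e # es)"
      unfolding A'B U_def using W B by (simp add: assoc_mult_mat[of _ n n _ n _ n] diag_es_def)
    finally show ?thesis .
  qed
  show ?case using U UU HU by blast
qed

lemma sum_delta_mult: "finite S \<Longrightarrow> (\<Sum>r\<in>S. f r * (if r = i then (a::'b::semiring_0) else 0)) = (if i \<in> S then f i * a else 0)"
proof -
  assume "finite S"
  have "(\<Sum>r\<in>S. f r * (if r = i then a else 0)) = (\<Sum>r\<in>S. if r = i then f r * a else 0)"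
    by (rule sum.cong) auto
  then show ?thesis using \<open>finite S\<close> by (simp add: sum.delta)
qed

lemma sum_delta_mult': "finite S \<Longrightarrow> (\<Sum>r\<in>S. f r * (if i = r then (a::'b::semiring_0) else 0)) = (if i \<in> S then f i * a else 0)"
  using sum_delta_mult[of S f i a] by (simp add: eq_commute[of i])

lemma spectral_entries:
  fixes H :: "complex mat"
  assumes H: "H \<in> carrier_mat n n" and herm: "mat_adjoint H = H" and cp: "char_poly H = (\<Prod>e\<leftarrow>es. [:-e,1:])"
  shows "\<exists>\<phi>. (\<forall>i<n. \<forall>j<n. (\<Sum>u<n. cnj (\<phi> i u) * \<phi> j u) = (if i = j then 1 else 0))
   \<and> (\<forall>u<n. \<forall>w<n. (\<Sum>i<n. \<phi> i u * cnj (\<phi> i w)) = (if u = w then 1 else 0))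
   \<and> (\<forall>i<n. \<forall>u<n. (\<Sum>w<n. H $$ (u,w) * \<phi> i w) = es ! i * \<phi> i u)
   \<and> (\<forall>u<n. \<forall>w<n. H $$ (u,w) = (\<Sum>i<n. es ! i * \<phi> i u * cnj (\<phi> i w)))"
proof -
  from hermitian_spectral[OF assms] obtain U where U: "U \<in> carrier_mat n n"
    and UU: "mat_adjoint U * U = 1\<^sub>m n" and HU: "H * U = U * diag_es n es" by auto
  have UU': "U * mat_adjoint U = 1\<^sub>m n"
    using mat_mult_left_right_inverse[OF adj_carrier[OF U] U UU] .
  define \<phi> where "\<phi> i u = U $$ (u,i)" for i u
  have on: "(\<Sum>u<n. cnj (\<phi> i u) * \<phi> j u) = (if i = j then 1 else 0)" if "i < n" "j < n" for i j
  proof -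
    have "(mat_adjoint U * U) $$ (i,j) = (\<Sum>u<n. cnj (\<phi> i u) * \<phi> j u)"
      using that U by (subst mult_idx[of _ n n]) (auto simp: \<phi>_def)
    then show ?thesis using UU that by simp
  qed
  have cpl: "(\<Sum>i<n. \<phi> i u * cnj (\<phi> i w)) = (if u = w then 1 else 0)" if "u < n" "w < n" for u w
  proof -
    have "(U * mat_adjoint U) $$ (u,w) = (\<Sum>i<n. \<phi> i u * cnj (\<phi> i w))"
      using that U by (subst mult_idx[of _ n n]) (auto simp: \<phi>_def)
    then show ?thesis using UU' that by simp
  qed
  have eig: "(\<Sum>w<n. H $$ (u,w) * \<phi> i w) = es ! i * \<phi> i u" if "i < n" "u < n" for i u
  proof -
    have "(H * U) $$ (u,i) = (\<Sum>w<n. H $$ (u,w) * \<phi> i w)"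
      using that U H by (subst mult_idx[of _ n n]) (auto simp: \<phi>_def)
    moreover have "(U * diag_es n es) $$ (u,i) = (\<Sum>r<n. U $$ (u,r) * (if r = i then es ! i else 0))"
      using that U by (subst mult_idx[of _ n n]) (auto simp: diag_es_def intro!: sum.cong)
    moreover have "\<dots> = es ! i * \<phi> i u" using that by (simp add: sum_delta_mult \<phi>_def)
    ultimately show ?thesis using HU by simp
  qed
  have spec: "H $$ (u,w) = (\<Sum>i<n. es ! i * \<phi> i u * cnj (\<phi> i w))" if "u < n" "w < n" for u w
  proof -
    have "H $$ (u,w) = (\<Sum>r<n. H $$ (u,r) * (if r = w then 1 else 0))"
      using that by (simp add: sum_delta_mult)
    also have "\<dots> = (\<Sum>r<n. H $$ (u,r) * (\<Sum>i<n. \<phi> i r * cnj (\<phi> i w)))"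
      using cpl that by (intro sum.cong) auto
    also have "\<dots> = (\<Sum>i<n. (\<Sum>r<n. H $$ (u,r) * \<phi> i r) * cnj (\<phi> i w))"
      by (simp add: sum_distrib_left sum_distrib_right mult.assoc) (rule sum.swap)
    also have "\<dots> = (\<Sum>i<n. es ! i * \<phi> i u * cnj (\<phi> i w))"
      using eig that by (intro sum.cong) auto
    finally show ?thesis .
  qed
  show ?thesis using on cpl eig spec by blast
qed



lemma order_sum_count: "sum_list (map (\<lambda>x. order a [:-x, 1:]) xs) = count (mset xs) (a::real)"
  by (induct xs) (auto simp: order_linear')

lemma linear_prod_mset:
  assumes "(\<Prod>x\<leftarrow>xs. [:-x, 1:]) = (\<Prod>y\<leftarrow>ys. [:-y, 1:] :: real poly)"
  shows "mset xs = mset ys"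
proof (rule multiset_eqI)
  fix a
  have "order a (\<Prod>x\<leftarrow>xs. [:-x, 1:]) = sum_list (map (\<lambda>x. order a [:-x, 1:]) xs)"
    by (subst order_prod_list) (auto simp: o_def)
  moreover have "order a (\<Prod>x\<leftarrow>ys. [:-x, 1:]) = sum_list (map (\<lambda>x. order a [:-x, 1:]) ys)"
    by (subst order_prod_list) (auto simp: o_def)
  ultimately show "count (mset xs) a = count (mset ys) a" using assms by (simp add: order_sum_count)
qed

lemma prod_list_mset_eq: "mset xs = mset ys \<Longrightarrow> (\<Prod>x\<leftarrow>xs. f x) = (\<Prod>x\<leftarrow>ys. (f x :: 'a :: comm_monoid_mult))"
  by (metis mset_map prod_mset_prod_list)

lemma map_poly_of_real_linear:
  "map_poly (of_real :: real \<Rightarrow> complex) (\<Prod>r\<leftarrow>rs. [:-r, 1:]) = (\<Prod>r\<leftarrow>map of_real rs. [:-r, 1:])"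
proof -
  interpret h: map_poly_comm_ring_hom "of_real :: real \<Rightarrow> complex" ..
  show ?thesis
  proof (induct rs)
    case (Cons r rs)
    have l: "map_poly (of_real :: real \<Rightarrow> complex) [:-r,1:] = [:-of_real r,1:]" by simp
    show ?case by (simp only: list.map prod_list.Cons h.hom_mult Cons l)
  qed simp
qed

lemma map_poly_of_real_inj:
  assumes "map_poly (of_real :: real \<Rightarrow> complex) p = map_poly of_real q" shows "p = q"
proof (rule poly_eqI)
  fix i
  have "coeff (map_poly (of_real :: real \<Rightarrow> complex) p) i = coeff (map_poly of_real q) i" using assms by simp
  then show "coeff p i = coeff q i" by (simp add: coeff_map_poly)
qed

lemma adjm_carrier: "adjacency_matrix n E \<in> carrier_mat n n"
  unfolding adjacency_matrix_def by auto

lemma adj_spectral: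
  assumes sg: "simple_graph n E"
  defines "A \<equiv> adjacency_matrix n E"
  shows "\<exists>\<phi>. (\<forall>i<n. \<forall>j<n. (\<Sum>u<n. cnj (\<phi> i u) * \<phi> j u) = (if i = j then 1 else 0))
   \<and> (\<forall>u<n. \<forall>w<n. (\<Sum>i<n. \<phi> i u * cnj (\<phi> i w)) = (if u = w then 1 else 0))
   \<and> (\<forall>u<n. \<forall>w<n. (if E u w then 1 else 0 :: complex) =
          (\<Sum>i<n. complex_of_real (eigenvalues_asc A ! i) * \<phi> i u * cnj (\<phi> i w)))
   \<and> length (eigenvalues_asc A) = n \<and> sorted (eigenvalues_asc A)"
proof -
  have A: "A \<in> carrier_mat n n" unfolding A_def by (rule adjm_carrier)
  define AC where "AC = map_mat (complex_of_real) A"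
  have AC: "AC \<in> carrier_mat n n" unfolding AC_def using A by auto
  have ACi: "AC $$ (u,w) = (if E u w then 1 else 0)" if "u < n" "w < n" for u w
    using that unfolding AC_def A_def adjacency_matrix_def by auto
  have sym: "E u w = E w u" for u w using sg unfolding simple_graph_def by blast
  have herm: "mat_adjoint AC = AC"
    by (rule eq_matI) (use AC ACi sym in auto)
  from char_poly_factorized[OF AC] obtain es0 where cp0: "char_poly AC = (\<Prod>a\<leftarrow>es0. [:- a, 1:])"
    and len0: "length es0 = n" by auto
  from spectral_entries[OF AC herm cp0] obtain \<phi>0 where
    on0: "\<forall>i<n. \<forall>j<n. (\<Sum>u<n. cnj (\<phi>0 i u) * \<phi>0 j u) = (if i = j then 1 else 0)"
    and eig0: "\<forall>i<n. \<forall>u<n. (\<Sum>w<n. AC $$ (u,w) * \<phi>0 i w) = es0 ! i * \<phi>0 i u" by blast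
  have real: "cnj (es0 ! i) = es0 ! i" if i: "i < n" for i
  proof -
    have "es0 ! i = (\<Sum>u<n. cnj (\<phi>0 i u) * (es0 ! i * \<phi>0 i u))"
      using on0 i by (simp add: sum_distrib_left[symmetric] mult.left_commute[of "cnj _"])
    also have "\<dots> = (\<Sum>u<n. cnj (\<phi>0 i u) * (\<Sum>w<n. AC $$ (u,w) * \<phi>0 i w))"
      using eig0 i by (intro sum.cong) auto
    also have "\<dots> = (\<Sum>u<n. \<Sum>w<n. cnj (\<phi>0 i u) * AC $$ (u,w) * \<phi>0 i w)"
      by (simp add: sum_distrib_left mult.assoc)
    finally have q: "es0 ! i = (\<Sum>u<n. \<Sum>w<n. cnj (\<phi>0 i u) * AC $$ (u,w) * \<phi>0 i w)" .
    have "cnj (es0 ! i) = (\<Sum>u<n. \<Sum>w<n. \<phi>0 i u * AC $$ (u,w) * cnj (\<phi>0 i w))"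
      unfolding q using ACi by (auto simp: intro!: sum.cong)
    also have "\<dots> = (\<Sum>w<n. \<Sum>u<n. \<phi>0 i u * AC $$ (u,w) * cnj (\<phi>0 i w))"
      by (rule sum.swap)
    also have "\<dots> = es0 ! i"
      unfolding q using ACi sym by (auto simp: mult.commute intro!: sum.cong)
    finally show ?thesis .
  qed
  define rs where "rs = map Re es0"
  have es0rs: "es0 = map complex_of_real rs"
    unfolding rs_def by (rule nth_equalityI) (use real len0 in \<open>auto simp: complex_eq_iff\<close>)
  have cpAC: "char_poly AC = map_poly complex_of_real (char_poly A)"
    unfolding AC_def by (rule comm_ring_hom.char_poly_hom[OF of_real_hom.comm_ring_hom_axioms A])
  have cpA: "char_poly A = (\<Prod>r\<leftarrow>rs. [:-r, 1:])"
    by (rule map_poly_of_real_inj) (use cpAC cp0 es0rs map_poly_of_real_linear in auto)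
  have cpA': "char_poly A = (\<Prod>r\<leftarrow>sort rs. [:-r, 1:])"
    unfolding cpA by (rule prod_list_mset_eq) simp
  have ev: "eigenvalues_asc A = sort rs"
    unfolding eigenvalues_asc_def
  proof (rule the_equality)
    show "sorted (sort rs) \<and> char_poly A = (\<Prod>e\<leftarrow>sort rs. [:- e, 1:])" using cpA' by simp
  next
    fix es assume "sorted es \<and> char_poly A = (\<Prod>e\<leftarrow>es. [:- e, 1:])"
    then have "sorted es" "mset es = mset rs" using linear_prod_mset[of es rs] cpA by auto
    then show "es = sort rs" using properties_for_sort by metis
  qed
  have cpAC': "char_poly AC = (\<Prod>r\<leftarrow>map complex_of_real (sort rs). [:-r, 1:])"
    unfolding cpAC cpA' map_poly_of_real_linear ..
  from spectral_entries[OF AC herm cpAC'] obtain \<phi> where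
    on: "\<forall>i<n. \<forall>j<n. (\<Sum>u<n. cnj (\<phi> i u) * \<phi> j u) = (if i = j then 1 else 0)"
    and cpl: "\<forall>u<n. \<forall>w<n. (\<Sum>i<n. \<phi> i u * cnj (\<phi> i w)) = (if u = w then 1 else 0)"
    and spec: "\<forall>u<n. \<forall>w<n. AC $$ (u,w) = (\<Sum>i<n. map complex_of_real (sort rs) ! i * \<phi> i u * cnj (\<phi> i w))"
    by blast
  have len: "length (sort rs) = n" using len0 rs_def by simp
  show ?thesis
    apply (rule exI[of _ \<phi>])
    using on cpl spec ACi len unfolding ev by auto
qed



lemma quad_form:
  fixes \<phi> :: "nat \<Rightarrow> nat \<Rightarrow> complex" and h :: "nat \<Rightarrow> complex"
  assumes K: "\<forall>u<n. \<forall>w<n. K u w = (\<Sum>i<n. m i * \<phi> i u * cnj (\<phi> i w))"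
  shows "(\<Sum>i<n. m i * ((\<Sum>u<n. cnj (h u) * \<phi> i u) * cnj (\<Sum>u<n. cnj (h u) * \<phi> i u)))
       = (\<Sum>u<n. \<Sum>w<n. cnj (h u) * K u w * h w)"
proof -
  have "(\<Sum>i<n. m i * ((\<Sum>u<n. cnj (h u) * \<phi> i u) * cnj (\<Sum>u<n. cnj (h u) * \<phi> i u)))
      = (\<Sum>i<n. \<Sum>u<n. \<Sum>w<n. cnj (h u) * (m i * \<phi> i u * cnj (\<phi> i w)) * h w)"
  proof (rule sum.cong[OF refl])
    fix i
    have "cnj (\<Sum>u<n. cnj (h u) * \<phi> i u) = (\<Sum>w<n. h w * cnj (\<phi> i w))" by simp
    then show "m i * ((\<Sum>u<n. cnj (h u) * \<phi> i u) * cnj (\<Sum>u<n. cnj (h u) * \<phi> i u))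
      = (\<Sum>u<n. \<Sum>w<n. cnj (h u) * (m i * \<phi> i u * cnj (\<phi> i w)) * h w)"
      by (simp add: sum_product sum_distrib_left mult_ac)
  qed
  also have "\<dots> = (\<Sum>u<n. \<Sum>i<n. \<Sum>w<n. cnj (h u) * (m i * \<phi> i u * cnj (\<phi> i w)) * h w)"
    by (rule sum.swap)
  also have "\<dots> = (\<Sum>u<n. \<Sum>w<n. \<Sum>i<n. cnj (h u) * (m i * \<phi> i u * cnj (\<phi> i w)) * h w)"
    by (rule sum.cong[OF refl], rule sum.swap)
  also have "\<dots> = (\<Sum>u<n. \<Sum>w<n. cnj (h u) * K u w * h w)"
    using K by (auto simp: sum_distrib_left sum_distrib_right intro!: sum.cong)
  finally show ?thesis .
qed

lemma cmod_sq: "complex_of_real ((cmod z)^2) = z * cnj z"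
  by (rule complex_norm_square)

lemma cmod_sq1: "z * cnj z = (complex_of_real (cmod z))^2"
  using complex_norm_square[of z] by simp

lemma cmod_sq2: "cnj z * z = (complex_of_real (cmod z))^2"
  using complex_norm_square[of z] by (simp add: mult.commute)

definition ipI :: "'i set \<Rightarrow> ('i \<Rightarrow> complex) \<Rightarrow> ('i \<Rightarrow> complex) \<Rightarrow> complex" where
  "ipI I f g = (\<Sum>p\<in>I. cnj (f p) * g p)"

lemma ipI_self: "ipI I f f = complex_of_real (\<Sum>p\<in>I. (cmod (f p))^2)"
  unfolding ipI_def by (simp add: cmod_sq2)

lemma bessel:
  assumes fin: "finite J" and finI: "finite I"
    and on: "\<forall>x\<in>J. \<forall>y\<in>J. ipI I (g x) (g y) = (if x = y then 1 else 0)"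
  shows "(\<Sum>x\<in>J. (cmod (ipI I (g x) f))^2) \<le> (\<Sum>p\<in>I. (cmod (f p))^2)"
proof -
  define \<alpha> where "\<alpha> x = ipI I (g x) f" for x
  define h where "h p = f p - (\<Sum>x\<in>J. \<alpha> x * g x p)" for p
  have ip_f_g: "ipI I f (g x) = cnj (\<alpha> x)" for x
    unfolding \<alpha>_def ipI_def by (simp add: mult.commute)
  have ipsumL: "ipI I (\<lambda>p. \<Sum>x\<in>J. \<alpha> x * g x p) k = (\<Sum>x\<in>J. cnj (\<alpha> x) * ipI I (g x) k)" for k
    unfolding ipI_def by (simp add: sum_distrib_left sum_distrib_right mult_ac sum.swap[of _ I J])
  have ipsumR: "ipI I k (\<lambda>p. \<Sum>x\<in>J. \<alpha> x * g x p) = (\<Sum>x\<in>J. \<alpha> x * ipI I k (g x))" for k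
    unfolding ipI_def by (simp add: sum_distrib_left sum_distrib_right mult_ac sum.swap[of _ I J])
  have ipdiffL: "ipI I (\<lambda>p. k1 p - k2 p) k = ipI I k1 k - ipI I k2 k" for k1 k2 k
    unfolding ipI_def by (simp add: algebra_simps sum_subtractf)
  have ipdiffR: "ipI I k (\<lambda>p. k1 p - k2 p) = ipI I k k1 - ipI I k k2" for k1 k2 k
    unfolding ipI_def by (simp add: algebra_simps sum_subtractf)
  define S where "S = (\<Sum>x\<in>J. \<alpha> x * cnj (\<alpha> x))"
  have gg: "(\<Sum>x\<in>J. cnj (\<alpha> x) * (\<Sum>y\<in>J. \<alpha> y * ipI I (g x) (g y))) = S"
  proof -
    have "(\<Sum>x\<in>J. cnj (\<alpha> x) * (\<Sum>y\<in>J. \<alpha> y * ipI I (g x) (g y)))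
        = (\<Sum>x\<in>J. cnj (\<alpha> x) * (\<Sum>y\<in>J. \<alpha> y * (if x = y then 1 else 0)))"
      using on by (intro sum.cong refl) auto
    also have "\<dots> = S" unfolding S_def using fin by (simp add: sum_delta_mult' mult.commute)
    finally show ?thesis .
  qed
  have "ipI I h h = ipI I f f - S"
  proof -
    have "ipI I h h = ipI I f f - ipI I f (\<lambda>p. \<Sum>x\<in>J. \<alpha> x * g x p)
        - (ipI I (\<lambda>p. \<Sum>x\<in>J. \<alpha> x * g x p) f - ipI I (\<lambda>p. \<Sum>x\<in>J. \<alpha> x * g x p) (\<lambda>p. \<Sum>x\<in>J. \<alpha> x * g x p))"
      unfolding h_def ipdiffL ipdiffR by simp
    also have "\<dots> = ipI I f f - S - (S - S)"
      unfolding ipsumL ipsumR ip_f_g gg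
      by (simp add: S_def \<alpha>_def[symmetric] mult.commute)
    finally show ?thesis by simp
  qed
  then have "complex_of_real (\<Sum>p\<in>I. (cmod (h p))^2) = complex_of_real (\<Sum>p\<in>I. (cmod (f p))^2) - S"
    by (simp add: ipI_self)
  moreover have "S = complex_of_real (\<Sum>x\<in>J. (cmod (ipI I (g x) f))^2)"
    unfolding S_def \<alpha>_def by (simp add: cmod_sq1)
  ultimately have "(\<Sum>p\<in>I. (cmod (h p))^2) = (\<Sum>p\<in>I. (cmod (f p))^2) - (\<Sum>x\<in>J. (cmod (ipI I (g x) f))^2)"
    by (metis of_real_diff of_real_eq_iff diff_eq_eq)
  moreover have "(\<Sum>p\<in>I. (cmod (h p))^2) \<ge> 0" by (auto intro: sum_nonneg)
  ultimately show ?thesis by linarith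
qed

lemma sum_pair_delta:
  fixes \<phi> :: "nat \<Rightarrow> complex" and G :: "nat \<times> nat \<Rightarrow> complex"
  assumes "s < d"
  shows "(\<Sum>p\<in>{..<n} \<times> {..<d}. G p * (case p of (u,s') \<Rightarrow> if s' = s then \<phi> u else 0))
       = (\<Sum>u<n. G (u,s) * \<phi> u)"
proof -
  have "(\<Sum>p\<in>{..<n} \<times> {..<d}. G p * (case p of (u,s') \<Rightarrow> if s' = s then \<phi> u else 0))
     = (\<Sum>u<n. \<Sum>s'<d. G (u,s') * (if s' = s then \<phi> u else 0))"
    by (simp add: sum.cartesian_product, intro sum.cong refl, auto split: prod.splits)
  also have "\<dots> = (\<Sum>u<n. G (u,s) * \<phi> u)"
    using assms by (intro sum.cong refl) (simp add: sum_delta_mult)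
  finally show ?thesis .
qed

lemma core:
  fixes \<phi> :: "nat \<Rightarrow> nat \<Rightarrow> complex" and \<mu> :: "nat \<Rightarrow> real" and a :: "nat \<Rightarrow> nat \<Rightarrow> complex"
    and g :: "'j \<Rightarrow> nat \<times> nat \<Rightarrow> complex"
  assumes cpl: "\<forall>u<n. \<forall>w<n. (\<Sum>i<n. \<phi> i u * cnj (\<phi> i w)) = (if u = w then 1 else 0)"
    and spec: "\<forall>u<n. \<forall>w<n. a u w = (\<Sum>i<n. complex_of_real (\<mu> i) * \<phi> i u * cnj (\<phi> i w))"
    and unit: "\<forall>i<n. (\<Sum>u<n. (cmod (\<phi> i u))^2) = 1"
    and finJ: "finite J" and cardJ: "card J \<le> c * d" and d: "d > 0" and t: "t < n"
    and gon: "\<forall>x\<in>J. \<forall>y\<in>J. ipI ({..<n} \<times> {..<d}) (g x) (g y) = (if x = y then 1 else 0)"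
    and gA: "\<forall>x\<in>J. (\<Sum>s<d. \<Sum>u<n. \<Sum>w<n. cnj (g x (u,s)) * a u w * g x (w,s)) = 0"
    and gv: "\<forall>s<d. (\<Sum>x\<in>J. (cmod (\<Sum>u<n. cnj (g x (u,s)) * \<phi> t u))^2) = 1"
  shows "\<exists>w. (\<forall>i<n. 0 \<le> w i \<and> w i \<le> 1) \<and> w t = 1 \<and> (\<Sum>i<n. w i) \<le> real c
            \<and> (\<Sum>i<n. w i * \<mu> i) = 0"
proof -
  define I where "I = {..<n} \<times> {..<d}"
  have finI: "finite I" unfolding I_def by auto
  define X where "X x s i = (\<Sum>u<n. cnj (g x (u,s)) * \<phi> i u)" for x s i
  define w where "w i = (\<Sum>s<d. \<Sum>x\<in>J. (cmod (X x s i))^2) / real d" for i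
  have bnd: "(\<Sum>x\<in>J. (cmod (X x s i))^2) \<le> 1" if s: "s < d" and i: "i < n" for s i
  proof -
    define f where "f p = (case p of (u,s') \<Rightarrow> if s' = s then \<phi> i u else 0)" for p :: "nat \<times> nat"
    have "ipI I (g x) f = X x s i" for x
      unfolding ipI_def I_def X_def f_def using sum_pair_delta[OF s] by simp
    moreover have "(\<Sum>p\<in>I. (cmod (f p))^2) = (\<Sum>u<n. \<Sum>s'<d. (cmod (if s' = s then \<phi> i u else 0))^2)"
      unfolding I_def f_def by (simp add: sum.cartesian_product, intro sum.cong refl, auto split: prod.splits)
    moreover have "\<dots> = (\<Sum>u<n. (cmod (\<phi> i u))^2)"
      using s by (intro sum.cong refl) (simp add: if_distrib[of "\<lambda>z. (cmod z)^2"] cong: if_cong)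
    ultimately show ?thesis using bessel[OF finJ finI gon[folded I_def], of f] unit i by simp
  qed
  have w01: "0 \<le> w i \<and> w i \<le> 1" if i: "i < n" for i
  proof
    show "0 \<le> w i" unfolding w_def by (auto intro!: sum_nonneg divide_nonneg_nonneg)
    have "(\<Sum>s<d. \<Sum>x\<in>J. (cmod (X x s i))^2) \<le> (\<Sum>s<d. 1)"
      by (rule sum_mono) (use bnd i in auto)
    then show "w i \<le> 1" unfolding w_def using d by simp
  qed
  have wt: "w t = 1" unfolding w_def X_def using gv d by simp
  have quad1: "(\<Sum>i<n. (cmod (X x s i))^2) = (\<Sum>u<n. (cmod (g x (u,s)))^2)" for x s
  proof -
    have K: "\<forall>u<n. \<forall>w<n. (if u = w then 1 else 0) = (\<Sum>i<n. 1 * \<phi> i u * cnj (\<phi> i w))"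
      using cpl by auto
    have "complex_of_real (\<Sum>i<n. (cmod (X x s i))^2) = (\<Sum>i<n. 1 * (X x s i * cnj (X x s i)))"
      by (simp add: cmod_sq1)
    also have "\<dots> = (\<Sum>u<n. \<Sum>w<n. cnj (g x (u,s)) * (if u = w then 1 else 0) * g x (w,s))"
      unfolding X_def by (rule quad_form[OF K])
    also have "\<dots> = (\<Sum>u<n. cnj (g x (u,s)) * g x (u,s))"
      by (intro sum.cong refl) (simp add: if_distrib[of "\<lambda>z. _ * z * _"] cong: if_cong)
    also have "\<dots> = complex_of_real (\<Sum>u<n. (cmod (g x (u,s)))^2)"
      by (simp add: cmod_sq2)
    finally show ?thesis by (simp only: of_real_eq_iff)
  qed
  have gnorm: "(\<Sum>s<d. \<Sum>u<n. (cmod (g x (u,s)))^2) = 1" if x: "x \<in> J" for x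
  proof -
    have "complex_of_real (\<Sum>p\<in>I. (cmod (g x p))^2) = 1"
      using gon x unfolding I_def ipI_self[symmetric] by auto
    then have "(\<Sum>p\<in>I. (cmod (g x p))^2) = 1" by (simp only: of_real_eq_1_iff)
    moreover have "(\<Sum>u<n. \<Sum>s<d. (cmod (g x (u,s)))^2) = (\<Sum>p\<in>I. (cmod (g x p))^2)"
      unfolding I_def sum.cartesian_product by (rule sum.cong) auto
    moreover have "(\<Sum>s<d. \<Sum>u<n. (cmod (g x (u,s)))^2) = (\<Sum>u<n. \<Sum>s<d. (cmod (g x (u,s)))^2)"
      by (rule sum.swap)
    ultimately show ?thesis by simp
  qed
  have sumw: "(\<Sum>i<n. w i) = real (card J) / real d"
  proof -
    have "(\<Sum>i<n. \<Sum>s<d. \<Sum>x\<in>J. (cmod (X x s i))^2) = (\<Sum>x\<in>J. \<Sum>s<d. \<Sum>i<n. (cmod (X x s i))^2)"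
      by (simp add: sum.swap[of _ "{..<n}"] sum.swap[of _ "{..<d}" J])
    also have "\<dots> = (\<Sum>x\<in>J. 1)"
      using gnorm by (intro sum.cong refl) (simp add: quad1)
    finally show ?thesis unfolding w_def by (simp add: sum_divide_distrib[symmetric])
  qed
  have wsum: "(\<Sum>i<n. w i) \<le> real c"
  proof -
    have "real (card J) \<le> real c * real d" using cardJ by (simp add: of_nat_mult[symmetric] del: of_nat_mult)
    then show ?thesis unfolding sumw using d by (simp add: divide_le_eq)
  qed
  have quadA: "(\<Sum>s<d. \<Sum>i<n. \<mu> i * (cmod (X x s i))^2) = 0" if x: "x \<in> J" for x
  proof -
    have K: "\<forall>u<n. \<forall>w<n. a u w = (\<Sum>i<n. complex_of_real (\<mu> i) * \<phi> i u * cnj (\<phi> i w))"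
      using spec by auto
    have "complex_of_real (\<Sum>i<n. \<mu> i * (cmod (X x s i))^2)
        = (\<Sum>i<n. complex_of_real (\<mu> i) * (X x s i * cnj (X x s i)))" for s
      by (simp add: cmod_sq1)
    also have "\<dots> s = (\<Sum>u<n. \<Sum>w<n. cnj (g x (u,s)) * a u w * g x (w,s))" for s
      unfolding X_def by (rule quad_form[OF K])
    finally have "complex_of_real (\<Sum>s<d. \<Sum>i<n. \<mu> i * (cmod (X x s i))^2) = 0"
      using gA x by simp
    then show ?thesis by (simp only: of_real_eq_0_iff)
  qed
  have wmu: "(\<Sum>i<n. w i * \<mu> i) = 0"
  proof -
    have "(\<Sum>i<n. w i * \<mu> i) = (\<Sum>i<n. \<Sum>s<d. \<Sum>x\<in>J. \<mu> i * (cmod (X x s i))^2) / real d"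
      unfolding w_def by (simp add: sum_divide_distrib sum_distrib_left sum_distrib_right mult_ac)
    also have "(\<Sum>i<n. \<Sum>s<d. \<Sum>x\<in>J. \<mu> i * (cmod (X x s i))^2) = (\<Sum>x\<in>J. \<Sum>s<d. \<Sum>i<n. \<mu> i * (cmod (X x s i))^2)"
      by (simp add: sum.swap[of _ "{..<n}"] sum.swap[of _ "{..<d}" J])
    also have "\<dots> = 0" using quadA by simp
    finally show ?thesis by simp
  qed
  show ?thesis using w01 wt wsum wmu by blast
qed



lemma foldr_sum_entries:
  fixes M :: "nat \<Rightarrow> complex mat"
  assumes "\<forall>k\<in>set ks. M k \<in> carrier_mat d d" "Z \<in> carrier_mat d d"
  shows "foldr (\<lambda>k M'. M k + M') ks Z \<in> carrier_mat d d \<and>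
    (\<forall>s<d. \<forall>s'<d. foldr (\<lambda>k M'. M k + M') ks Z $$ (s,s') = (\<Sum>k\<leftarrow>ks. M k $$ (s,s')) + Z $$ (s,s'))"
  using assms by (induct ks) (auto simp: add.assoc)

lemma coloring_sum:
  fixes M :: "nat \<Rightarrow> complex mat"
  assumes "\<forall>k<c. M k \<in> carrier_mat d d" "foldr (\<lambda>k M'. M k + M') [0..<c] (0\<^sub>m d d) = 1\<^sub>m d"
    "s < d" "s' < d"
  shows "(\<Sum>k<c. M k $$ (s,s')) = (if s = s' then 1 else (0::complex))"
proof -
  have "foldr (\<lambda>k M'. M k + M') [0..<c] (0\<^sub>m d d) $$ (s,s') = (\<Sum>k\<leftarrow>[0..<c]. M k $$ (s,s')) + 0"
    using foldr_sum_entries[of "[0..<c]" M d "0\<^sub>m d d"] assms by auto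
  then show ?thesis using assms by (simp add: sum_set_upt_conv_sum_list_nat[symmetric] atLeast0LessThan)
qed

lemma proj_orth:
  fixes p :: "nat \<Rightarrow> nat \<Rightarrow> nat \<Rightarrow> complex"
  assumes herm: "\<forall>k<c. \<forall>s<d. \<forall>r<d. cnj (p k s r) = p k r s"
    and idem: "\<forall>k<c. \<forall>s<d. \<forall>s'<d. (\<Sum>r<d. p k s r * p k r s') = p k s s'"
    and sm: "\<forall>s<d. \<forall>s'<d. (\<Sum>k<c. p k s s') = (if s = s' then 1 else 0)"
    and kl: "k < c" "l < c" "k \<noteq> l" and ss: "s < d" "s' < d"
  shows "(\<Sum>r<d. p k s r * p l r s') = 0"
proof -
  define F where "F m a b = (\<Sum>r<d. p m a r * p l r b)" for m a b
  define T where "T m b = (\<Sum>a<d. (cmod (F m a b))^2)" for m b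
  have Tc: "complex_of_real (T m b) = (\<Sum>r<d. \<Sum>r'<d. cnj (p l r b) * p l r' b * p m r r')"
    if m: "m < c" for m b
  proof -
    have "complex_of_real (T m b) = (\<Sum>a<d. cnj (F m a b) * F m a b)"
      unfolding T_def by (simp add: cmod_sq2)
    also have "\<dots> = (\<Sum>a<d. \<Sum>r<d. \<Sum>r'<d. (cnj (p l r b) * p l r' b) * (cnj (p m a r) * p m a r'))"
      unfolding F_def by (simp add: sum_product sum_distrib_left sum_distrib_right mult_ac)
    also have "\<dots> = (\<Sum>r<d. \<Sum>r'<d. \<Sum>a<d. (cnj (p l r b) * p l r' b) * (cnj (p m a r) * p m a r'))"
      by (subst sum.swap, rule sum.cong[OF refl], rule sum.swap)
    also have "\<dots> = (\<Sum>r<d. \<Sum>r'<d. (cnj (p l r b) * p l r' b) * (\<Sum>a<d. p m r a * p m a r'))"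
      using herm m by (auto simp: sum_distrib_left intro!: sum.cong)
    also have "\<dots> = (\<Sum>r<d. \<Sum>r'<d. cnj (p l r b) * p l r' b * p m r r')"
      using idem m by (auto intro!: sum.cong)
    finally show ?thesis .
  qed
  have Tl: "T l b = (\<Sum>a<d. (cmod (p l a b))^2)" if b: "b < d" for b
    unfolding T_def F_def using idem b kl by (auto intro!: sum.cong)
  have Tsum: "(\<Sum>m<c. T m b) = T l b" if b: "b < d" for b
  proof -
    have "complex_of_real (\<Sum>m<c. T m b) = (\<Sum>m<c. \<Sum>r<d. \<Sum>r'<d. cnj (p l r b) * p l r' b * p m r r')"
      using Tc by simp
    also have "\<dots> = (\<Sum>r<d. \<Sum>r'<d. cnj (p l r b) * p l r' b * (\<Sum>m<c. p m r r'))"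
      by (simp add: sum_distrib_left sum.swap[of _ "{..<c}"])
    also have "\<dots> = (\<Sum>r<d. \<Sum>r'<d. cnj (p l r b) * p l r' b * (if r = r' then 1 else 0))"
      using sm by (auto intro!: sum.cong)
    also have "\<dots> = (\<Sum>r<d. cnj (p l r b) * p l r b)"
      by (intro sum.cong refl) (simp add: sum_delta_mult')
    also have "\<dots> = complex_of_real (T l b)"
      unfolding Tl[OF b] by (simp add: cmod_sq2)
    finally show ?thesis by (simp only: of_real_eq_iff)
  qed
  have Tnn: "T m b \<ge> 0" for m b unfolding T_def by (auto intro: sum_nonneg)
  have "T k s' = 0"
  proof -
    have fin: "finite ({..<c} - {l})" by auto
    have "(\<Sum>m<c. T m s') = T l s' + (\<Sum>m\<in>{..<c} - {l}. T m s')"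
      using kl by (subst sum.remove[of _ l]) auto
    then have z: "(\<Sum>m\<in>{..<c} - {l}. T m s') = 0" using Tsum[OF ss(2)] by simp
    have "T k s' \<le> (\<Sum>m\<in>{..<c} - {l}. T m s')"
      using kl by (intro member_le_sum) (auto simp: Tnn)
    then show ?thesis using z Tnn[of k s'] by simp
  qed
  then have "(cmod (F k s s'))^2 \<le> 0"
    unfolding T_def using ss by (metis (no_types, lifting) finite_lessThan lessThan_iff member_le_sum zero_le_power2)
  then show ?thesis unfolding F_def by simp
qed



lemma pp_identity:
  fixes p :: "nat \<Rightarrow> nat \<Rightarrow> nat \<Rightarrow> nat \<Rightarrow> complex" and x y :: "nat \<Rightarrow> complex"
  assumes herm: "\<forall>s<d. \<forall>r<d. cnj (p u k s r) = p u k r s"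
  shows "(\<Sum>r<d. cnj (\<Sum>s<d. p u k r s * x s) * (\<Sum>s<d. p w l r s * y s))
       = (\<Sum>s<d. \<Sum>s'<d. cnj (x s) * (\<Sum>r<d. p u k s r * p w l r s') * y s')"
proof -
  have "(\<Sum>r<d. cnj (\<Sum>s<d. p u k r s * x s) * (\<Sum>s<d. p w l r s * y s))
      = (\<Sum>r<d. (\<Sum>s<d. p u k s r * cnj (x s)) * (\<Sum>s<d. p w l r s * y s))"
    using herm by (auto intro!: sum.cong)
  also have "\<dots> = (\<Sum>r<d. \<Sum>s<d. \<Sum>s'<d. cnj (x s) * (p u k s r * p w l r s') * y s')"
    by (rule sum.cong[OF refl], subst sum_product, intro sum.cong refl, simp add: mult_ac)
  also have "\<dots> = (\<Sum>s<d. \<Sum>r<d. \<Sum>s'<d. cnj (x s) * (p u k s r * p w l r s') * y s')"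
    by (rule sum.swap)
  also have "\<dots> = (\<Sum>s<d. \<Sum>s'<d. \<Sum>r<d. cnj (x s) * (p u k s r * p w l r s') * y s')"
    by (rule sum.cong[OF refl], rule sum.swap)
  also have "\<dots> = (\<Sum>s<d. \<Sum>s'<d. cnj (x s) * (\<Sum>r<d. p u k s r * p w l r s') * y s')"
    by (simp add: sum_distrib_left sum_distrib_right)
  finally show ?thesis .
qed

lemma construct:
  fixes p :: "nat \<Rightarrow> nat \<Rightarrow> nat \<Rightarrow> nat \<Rightarrow> complex" and v :: "nat \<Rightarrow> complex"
    and a :: "nat \<Rightarrow> nat \<Rightarrow> complex"
  assumes herm: "\<forall>u<n. \<forall>k<c. \<forall>s<d. \<forall>r<d. cnj (p u k s r) = p u k r s"
    and idem: "\<forall>u<n. \<forall>k<c. \<forall>s<d. \<forall>s'<d. (\<Sum>r<d. p u k s r * p u k r s') = p u k s s'"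
    and sm: "\<forall>u<n. \<forall>s<d. \<forall>s'<d. (\<Sum>k<c. p u k s s') = (if s = s' then 1 else 0)"
    and edge: "\<forall>u<n. \<forall>w<n. a u w \<noteq> 0 \<longrightarrow> (\<forall>k<c. \<forall>s<d. \<forall>s'<d. (\<Sum>r<d. p u k s r * p w k r s') = 0)"
    and vunit: "(\<Sum>u<n. (cmod (v u))^2) = 1"
  shows "\<exists>J (g :: nat \<times> nat \<Rightarrow> nat \<times> nat \<Rightarrow> complex). finite J \<and> card J \<le> c * d
    \<and> (\<forall>x\<in>J. \<forall>y\<in>J. ipI ({..<n} \<times> {..<d}) (g x) (g y) = (if x = y then 1 else 0))
    \<and> (\<forall>x\<in>J. (\<Sum>s<d. \<Sum>u<n. \<Sum>w<n. cnj (g x (u,s)) * a u w * g x (w,s)) = 0)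
    \<and> (\<forall>s<d. (\<Sum>x\<in>J. (cmod (\<Sum>u<n. cnj (g x (u,s)) * v u))^2) = 1)"
proof -
  define nv where "nv u = complex_of_real ((cmod (v u))^2)" for u
  have nv_cnj: "cnj (v u) * v u = nv u" for u unfolding nv_def by (simp add: cmod_sq2)
  have nv_real: "cnj (nv u) = nv u" for u unfolding nv_def by simp
  define R where "R k = mat d d (\<lambda>(s,s'). \<Sum>u<n. nv u * p u k s s')" for k
  have R: "R k \<in> carrier_mat d d" for k unfolding R_def by auto
  have Ri: "s < d \<Longrightarrow> s' < d \<Longrightarrow> R k $$ (s,s') = (\<Sum>u<n. nv u * p u k s s')" for k s s'
    unfolding R_def by auto
  have Rherm: "mat_adjoint (R k) = R k" if k: "k < c" for k
  proof (rule eq_matI)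
    fix i j assume "i < dim_row (R k)" "j < dim_col (R k)"
    then have ij: "i < d" "j < d" using R[of k] by auto
    have "mat_adjoint (R k) $$ (i,j) = cnj (R k $$ (j,i))" using ij R[of k] by simp
    also have "\<dots> = (\<Sum>u<n. nv u * p u k i j)"
      unfolding Ri[OF ij(2) ij(1)] using herm k ij nv_real by (auto intro!: sum.cong)
    also have "\<dots> = R k $$ (i,j)" using Ri[OF ij] by simp
    finally show "mat_adjoint (R k) $$ (i,j) = R k $$ (i,j)" .
  qed (use R[of k] in auto)
  define Q where "Q k es \<psi> \<longleftrightarrow> (\<forall>i<d. \<forall>j<d. (\<Sum>u<d. cnj (\<psi> i u) * \<psi> j u) = (if i = j then 1 else 0))
     \<and> (\<forall>i<d. \<forall>u<d. (\<Sum>w<d. R k $$ (u,w) * \<psi> i w) = es ! i * \<psi> i u)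
     \<and> (\<forall>u<d. \<forall>w<d. R k $$ (u,w) = (\<Sum>i<d. es ! i * \<psi> i u * cnj (\<psi> i w)))"
    for k and es :: "complex list" and \<psi> :: "nat \<Rightarrow> nat \<Rightarrow> complex"
  have ex: "\<exists>es \<psi>. Q k es \<psi>" if k: "k < c" for k
  proof -
    from char_poly_factorized[OF R] obtain es where "char_poly (R k) = (\<Prod>a\<leftarrow>es. [:- a, 1:])" by auto
    from spectral_entries[OF R Rherm[OF k] this] show ?thesis unfolding Q_def by blast
  qed
  have "\<forall>k. \<exists>z. k < c \<longrightarrow> Q k (fst z) (snd z)" using ex by fastforce
  from choice[OF this] obtain f where f: "\<And>k. k < c \<Longrightarrow> Q k (fst (f k)) (snd (f k))" by blast
  define ES where "ES k = fst (f k)" for k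
  define \<Psi> where "\<Psi> k = snd (f k)" for k
  have on: "\<And>k. k < c \<Longrightarrow> \<forall>i<d. \<forall>j<d. (\<Sum>u<d. cnj (\<Psi> k i u) * \<Psi> k j u) = (if i = j then 1 else 0)"
    and eig: "\<And>k. k < c \<Longrightarrow> \<forall>i<d. \<forall>u<d. (\<Sum>w<d. R k $$ (u,w) * \<Psi> k i w) = ES k ! i * \<Psi> k i u"
    and spec: "\<And>k. k < c \<Longrightarrow> \<forall>u<d. \<forall>w<d. R k $$ (u,w) = (\<Sum>i<d. ES k ! i * \<Psi> k i u * cnj (\<Psi> k i w))"
    using f unfolding Q_def ES_def \<Psi>_def by blast+
  define Pv where "Pv u k j r = (\<Sum>s<d. p u k r s * \<Psi> k j s)" for u k j r
  have pp: "(\<Sum>r<d. cnj (Pv u k j r) * Pv w l j' r)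
       = (\<Sum>s<d. \<Sum>s'<d. cnj (\<Psi> k j s) * (\<Sum>r<d. p u k s r * p w l r s') * \<Psi> l j' s')"
    if "u < n" "k < c" for u w k l j j'
    unfolding Pv_def by (rule pp_identity) (use herm that in auto)
  define M where "M k j j' = (\<Sum>u<n. nv u * (\<Sum>r<d. cnj (Pv u k j r) * Pv u k j' r))" for k j j'
  have Mform: "M k j j' = (if j = j' then ES k ! j' else 0)" if k: "k < c" and j: "j < d" "j' < d" for k j j'
  proof -
    have "M k j j' = (\<Sum>u<n. nv u * (\<Sum>s<d. \<Sum>s'<d. cnj (\<Psi> k j s) * p u k s s' * \<Psi> k j' s'))"
      unfolding M_def using pp idem k by (auto intro!: sum.cong)
    also have "\<dots> = (\<Sum>s<d. \<Sum>s'<d. cnj (\<Psi> k j s) * (\<Sum>u<n. nv u * p u k s s') * \<Psi> k j' s')"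
      by (simp add: sum_distrib_left sum_distrib_right sum.swap[of _ "{..<n}"] mult_ac)
    also have "\<dots> = (\<Sum>s<d. cnj (\<Psi> k j s) * (\<Sum>s'<d. R k $$ (s,s') * \<Psi> k j' s'))"
      using Ri by (auto simp: sum_distrib_left mult_ac intro!: sum.cong)
    also have "\<dots> = (\<Sum>s<d. cnj (\<Psi> k j s) * (ES k ! j' * \<Psi> k j' s))"
      using eig[OF k] j by (auto intro!: sum.cong)
    also have "\<dots> = ES k ! j' * (\<Sum>s<d. cnj (\<Psi> k j s) * \<Psi> k j' s)"
      by (simp add: sum_distrib_left mult_ac)
    also have "\<dots> = (if j = j' then ES k ! j' else 0)"
      using on[OF k] j by simp
    finally show ?thesis .
  qed
  define Dr where "Dr k j = (\<Sum>u<n. (cmod (v u))^2 * (\<Sum>r<d. (cmod (Pv u k j r))^2))" for k j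
  have Dr_nn: "Dr k j \<ge> 0" for k j unfolding Dr_def by (auto intro!: sum_nonneg mult_nonneg_nonneg)
  have D_real: "ES k ! j = complex_of_real (Dr k j)" if k: "k < c" and j: "j < d" for k j
  proof -
    have "ES k ! j = M k j j" using Mform[OF k j j] by simp
    also have "\<dots> = complex_of_real (Dr k j)"
      unfolding M_def Dr_def nv_def by (simp add: cmod_sq2)
    finally show ?thesis .
  qed
  define J where "J = {(k,j). k < c \<and> j < d \<and> Dr k j \<noteq> 0}"
  have Jsub: "J \<subseteq> {..<c} \<times> {..<d}" unfolding J_def by auto
  have finJ: "finite J" using Jsub finite_subset by blast
  have cardJ: "card J \<le> c * d"
    using card_mono[OF _ Jsub] by (simp add: card_cartesian_product)
  define \<alpha> where "\<alpha> k j = complex_of_real (1 / sqrt (Dr k j))" for k j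
  have \<alpha>_real: "cnj (\<alpha> k j) = \<alpha> k j" for k j unfolding \<alpha>_def by simp
  have \<alpha>sq: "\<alpha> k j * \<alpha> k j * complex_of_real (Dr k j) = 1" if "(k,j) \<in> J" for k j
  proof -
    have "Dr k j > 0" using that Dr_nn[of k j] unfolding J_def by auto
    then have "1 / sqrt (Dr k j) * (1 / sqrt (Dr k j)) * Dr k j = 1" by (simp add: field_simps)
    then show ?thesis unfolding \<alpha>_def by (metis of_real_1 of_real_mult)
  qed
  define g where "g x q = (case x of (k,j) \<Rightarrow> case q of (u,s) \<Rightarrow> \<alpha> k j * v u * Pv u k j s)"
    for x :: "nat \<times> nat" and q :: "nat \<times> nat"
  have gi: "g (k,j) (u,s) = \<alpha> k j * v u * Pv u k j s" for k j u s unfolding g_def by simp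
  have gon: "ipI ({..<n} \<times> {..<d}) (g x) (g y) = (if x = y then 1 else 0)" if x: "x \<in> J" and y: "y \<in> J" for x y
  proof -
    obtain k j where xkj: "x = (k,j)" by (cases x)
    obtain l j' where ylj: "y = (l,j')" by (cases y)
    have k: "k < c" "j < d" using x xkj unfolding J_def by auto
    have l: "l < c" "j' < d" using y ylj unfolding J_def by auto
    have "ipI ({..<n} \<times> {..<d}) (g x) (g y) = (\<Sum>u<n. \<Sum>s<d. cnj (g (k,j) (u,s)) * g (l,j') (u,s))"
      unfolding ipI_def xkj ylj by (simp add: sum.cartesian_product split_def)
    also have "\<dots> = \<alpha> k j * \<alpha> l j' * (\<Sum>u<n. nv u * (\<Sum>s<d. cnj (Pv u k j s) * Pv u l j' s))"
      unfolding gi nv_cnj[symmetric] using \<alpha>_real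
      by (simp add: sum_distrib_left mult_ac)
    also have "\<dots> = (if x = y then 1 else 0)"
    proof (cases "k = l")
      case True
      then have "\<alpha> k j * \<alpha> l j' * (\<Sum>u<n. nv u * (\<Sum>s<d. cnj (Pv u k j s) * Pv u l j' s)) =
          \<alpha> k j * \<alpha> k j' * (if j = j' then ES k ! j' else 0)"
        using Mform[OF k(1) k(2) l(2)] unfolding M_def by simp
      then show ?thesis using True xkj ylj \<alpha>sq[of k j] x D_real[OF k] by auto
    next
      case False
      have "(\<Sum>s<d. cnj (Pv u k j s) * Pv u l j' s) = 0" if u: "u < n" for u
      proof -
        have "(\<Sum>r<d. p u k s r * p u l r s') = 0" if "s < d" "s' < d" for s s'
          by (rule proj_orth[where c=c and d=d and p="p u"]) (use herm idem sm u k l False that in auto)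
        then show ?thesis using pp[OF u k(1)] by simp
      qed
      then show ?thesis using False xkj ylj by simp
    qed
    finally show ?thesis .
  qed
  have gA: "(\<Sum>s<d. \<Sum>u<n. \<Sum>w<n. cnj (g x (u,s)) * a u w * g x (w,s)) = 0" if x: "x \<in> J" for x
  proof -
    obtain k j where xkj: "x = (k,j)" by (cases x)
    have k: "k < c" "j < d" using x xkj unfolding J_def by auto
    have "(\<Sum>s<d. \<Sum>u<n. \<Sum>w<n. cnj (g x (u,s)) * a u w * g x (w,s))
        = (\<Sum>u<n. \<Sum>w<n. \<Sum>s<d. cnj (g x (u,s)) * a u w * g x (w,s))"
      by (simp add: sum.swap[of _ "{..<d}"])
    also have "\<dots> = (\<Sum>u<n. \<Sum>w<n. \<alpha> k j * \<alpha> k j * cnj (v u) * a u w * v w * (\<Sum>s<d. cnj (Pv u k j s) * Pv w k j s))"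
      unfolding xkj gi using \<alpha>_real by (simp add: sum_distrib_left mult_ac)
    also have "\<dots> = 0"
    proof (rule sum.neutral, rule ballI, rule sum.neutral, rule ballI)
      fix u w assume u: "u \<in> {..<n}" and w: "w \<in> {..<n}"
      show "\<alpha> k j * \<alpha> k j * cnj (v u) * a u w * v w * (\<Sum>s<d. cnj (Pv u k j s) * Pv w k j s) = 0"
      proof (cases "a u w = 0")
        case False
        then have "\<forall>s<d. \<forall>s'<d. (\<Sum>r<d. p u k s r * p w k r s') = 0" using edge u w k by auto
        then have "(\<Sum>s<d. cnj (Pv u k j s) * Pv w k j s) = 0" using pp[of u k j w k j] u k by simp
        then show ?thesis by simp
      qed simp
    qed
    finally show ?thesis .
  qed
  have gv: "(\<Sum>x\<in>J. (cmod (\<Sum>u<n. cnj (g x (u,s)) * v u))^2) = 1" if s: "s < d" for s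
  proof -
    have inner: "(\<Sum>u<n. cnj (g (k,j) (u,s)) * v u) = \<alpha> k j * complex_of_real (Dr k j) * cnj (\<Psi> k j s)"
      if k: "k < c" "j < d" for k j
    proof -
      have e: "(\<Sum>s'<d. R k $$ (s,s') * \<Psi> k j s') = ES k ! j * \<Psi> k j s"
        using eig[OF k(1)] k s by simp
      have "(\<Sum>u<n. cnj (g (k,j) (u,s)) * v u) = \<alpha> k j * (\<Sum>u<n. nv u * cnj (Pv u k j s))"
        unfolding gi nv_cnj[symmetric] using \<alpha>_real by (simp add: sum_distrib_left mult_ac)
      also have "(\<Sum>u<n. nv u * cnj (Pv u k j s)) = (\<Sum>u<n. \<Sum>s'<d. nv u * p u k s' s * cnj (\<Psi> k j s'))"
        unfolding Pv_def using herm k s by (auto simp: sum_distrib_left mult_ac intro!: sum.cong)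
      also have "\<dots> = (\<Sum>s'<d. \<Sum>u<n. nv u * p u k s' s * cnj (\<Psi> k j s'))"
        by (rule sum.swap)
      also have "\<dots> = (\<Sum>s'<d. cnj (R k $$ (s,s') * \<Psi> k j s'))"
      proof (rule sum.cong[OF refl])
        fix s' assume "s' \<in> {..<d}"
        then have s': "s' < d" by simp
        have "cnj (R k $$ (s,s')) = (\<Sum>u<n. nv u * p u k s' s)"
          unfolding Ri[OF s s'] using s s' herm k nv_real by (auto intro!: sum.cong)
        then show "(\<Sum>u<n. nv u * p u k s' s * cnj (\<Psi> k j s')) = cnj (R k $$ (s,s') * \<Psi> k j s')"
          by (simp add: sum_distrib_right)
      qed
      also have "\<dots> = cnj (\<Sum>s'<d. R k $$ (s,s') * \<Psi> k j s')"
        by simp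
      also have "\<dots> = cnj (ES k ! j * \<Psi> k j s)"
        by (simp only: e)
      also have "\<dots> = complex_of_real (Dr k j) * cnj (\<Psi> k j s)"
        using D_real[OF k] by simp
      finally show ?thesis by simp
    qed
    have trm: "(cmod (\<Sum>u<n. cnj (g x (u,s)) * v u))^2 = (case x of (k,j) \<Rightarrow> Dr k j * (cmod (\<Psi> k j s))^2)"
      if x: "x \<in> J" for x
    proof -
      obtain k j where xkj: "x = (k,j)" by (cases x)
      have k: "k < c" "j < d" using x xkj unfolding J_def by auto
      have pos: "Dr k j > 0" using x xkj Dr_nn[of k j] unfolding J_def by auto
      have "(cmod (\<Sum>u<n. cnj (g x (u,s)) * v u))^2 = (cmod (\<alpha> k j * complex_of_real (Dr k j)))^2 * (cmod (\<Psi> k j s))^2"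
        unfolding xkj inner[OF k] by (simp add: norm_mult power_mult_distrib)
      also have "(cmod (\<alpha> k j * complex_of_real (Dr k j)))^2 = Dr k j"
      proof -
        have "1 / sqrt (Dr k j) * Dr k j = sqrt (Dr k j)" using pos real_div_sqrt[of "Dr k j"] by simp
        then have "\<alpha> k j * complex_of_real (Dr k j) = complex_of_real (sqrt (Dr k j))"
          unfolding \<alpha>_def by (metis of_real_mult)
        then show ?thesis using pos by simp
      qed
      finally show ?thesis using xkj by simp
    qed
    have "(\<Sum>x\<in>J. (cmod (\<Sum>u<n. cnj (g x (u,s)) * v u))^2) = (\<Sum>x\<in>J. case x of (k,j) \<Rightarrow> Dr k j * (cmod (\<Psi> k j s))^2)"
      using trm by (rule sum.cong[OF refl])
    also have "\<dots> = (\<Sum>x\<in>{..<c} \<times> {..<d}. case x of (k,j) \<Rightarrow> Dr k j * (cmod (\<Psi> k j s))^2)"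
      by (rule sum.mono_neutral_left) (auto simp: J_def)
    also have "\<dots> = (\<Sum>k<c. \<Sum>j<d. Dr k j * (cmod (\<Psi> k j s))^2)"
      by (simp add: sum.cartesian_product)
    also have "complex_of_real \<dots> = (\<Sum>k<c. R k $$ (s,s))"
      using spec s D_real by (auto simp: cmod_sq1 intro!: sum.cong)
    also have "\<dots> = (\<Sum>u<n. nv u * (\<Sum>k<c. p u k s s))"
      using Ri s by (simp add: sum_distrib_left sum.swap[of _ "{..<c}"])
    also have "\<dots> = (\<Sum>u<n. nv u)" using sm s by simp
    also have "\<dots> = complex_of_real (\<Sum>u<n. (cmod (v u))^2)" unfolding nv_def by (simp only: of_real_sum)
    also have "\<dots> = 1" using vunit by simp
    finally show ?thesis by (simp only: of_real_eq_1_iff)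
  qed
  show ?thesis
    apply (rule exI[of _ J], rule exI[of _ g])
    using finJ cardJ gon gA gv by blast
qed



lemma comb0:
  fixes x w :: "nat \<Rightarrow> real" and m C :: nat
  assumes sorted: "\<And>i j. i \<le> j \<Longrightarrow> j < m \<Longrightarrow> x i \<le> x j"
    and w01: "\<And>i. i < m \<Longrightarrow> 0 \<le> w i \<and> w i \<le> 1"
    and wsum: "(\<Sum>i<m. w i) \<le> real C"
  shows "\<exists>k\<le>C. k \<le> m \<and> (\<Sum>i<k. x i) \<le> (\<Sum>i<m. w i * x i)"
proof -
  define K where "K = min C m"
  define S where "S k = (\<Sum>i<k. x i)" for k
  obtain k where k: "k \<le> K" and kmin: "\<And>k'. k' \<le> K \<Longrightarrow> S k \<le> S k'"
  proof -
    have fin: "finite (S ` {..K})" and ne: "S ` {..K} \<noteq> {}" by auto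
    have "Min (S ` {..K}) \<in> S ` {..K}" by (rule Min_in[OF fin ne])
    then obtain k where k0: "k \<in> {..K}" and ky: "Min (S ` {..K}) = S k" by (rule imageE)
    from k0 have k: "k \<le> K" by simp
    have "S k \<le> S k'" if "k' \<le> K" for k'
      unfolding ky[symmetric] by (rule Min_le[OF fin]) (use that in auto)
    then show ?thesis using that k by blast
  qed
  have km: "k \<le> m" "k \<le> C" using k unfolding K_def by auto
  have neg: "x i \<le> 0" if i: "i < k" for i
  proof -
    have "S k \<le> S (k - 1)" using kmin k by auto
    moreover have "S k = S (k - 1) + x (k - 1)" using i unfolding S_def
      by (cases k) auto
    ultimately have "x (k - 1) \<le> 0" by simp
    moreover have "x i \<le> x (k - 1)" using sorted[of i "k - 1"] i km by auto
    ultimately show ?thesis by simp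
  qed
  have splitm: "(\<Sum>i<m. f i) = (\<Sum>i<k. f i) + (\<Sum>i\<in>{k..<m}. f i)" for f :: "nat \<Rightarrow> real"
  proof -
    have "{..<m} = {..<k} \<union> {k..<m}" using km by auto
    then have "(\<Sum>i<m. f i) = sum f ({..<k} \<union> {k..<m})" by simp
    also have "\<dots> = sum f {..<k} + sum f {k..<m}" by (rule sum.union_disjoint) auto
    finally show ?thesis .
  qed
  have split: "(\<Sum>i<m. w i * x i) = (\<Sum>i<k. w i * x i) + (\<Sum>i\<in>{k..<m}. w i * x i)"
    by (rule splitm)
  have low: "(\<Sum>i<k. x i) \<le> (\<Sum>i<k. w i * x i)"
  proof (rule sum_mono)
    fix i assume "i \<in> {..<k}"
    then have i: "i < k" "i < m" using km by auto
    have "(1 - w i) * x i \<le> 0" using neg[OF i(1)] w01[OF i(2)] by (simp add: mult_nonneg_nonpos)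
    then show "x i \<le> w i * x i" by (simp add: algebra_simps)
  qed
  show ?thesis
  proof (cases "k < K")
    case True
    have "S k \<le> S (Suc k)" using kmin True by auto
    then have xk: "x k \<ge> 0" unfolding S_def by simp
    have "(\<Sum>i\<in>{k..<m}. w i * x i) \<ge> 0"
    proof (rule sum_nonneg)
      fix i assume "i \<in> {k..<m}"
      then have "x i \<ge> x k" "0 \<le> w i" using sorted[of k i] w01[of i] by auto
      then show "0 \<le> w i * x i" using xk by simp
    qed
    then show ?thesis using split low km by (intro exI[of _ k]) auto
  next
    case False
    then have kK: "k = K" using k by simp
    show ?thesis
    proof (cases "k = m")
      case True
      then show ?thesis using split low km by (intro exI[of _ k]) auto
    next
      case False
      then have kC: "k = C" "C < m" using kK unfolding K_def by auto
      show ?thesis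
      proof (cases "k = 0")
        case True
        then have "C = 0" using kC by simp
        then have s0: "(\<Sum>i<m. w i) \<le> 0" using wsum by simp
        have ge: "0 \<le> (\<Sum>i<m. w i)" by (rule sum_nonneg) (use w01 in auto)
        have "(\<Sum>i<m. w i) = 0" using s0 ge by simp
        then have "\<forall>i\<in>{..<m}. w i = 0"
          using sum_nonneg_eq_0_iff[of "{..<m}" w] w01 by auto
        then show ?thesis using True by (intro exI[of _ 0]) auto
      next
        case False
        define t where "t = x (k - 1)"
        have t0: "t \<le> 0" unfolding t_def using neg False by simp
        have tl: "x i \<le> t" if "i < k" for i unfolding t_def using sorted[of i "k - 1"] that km by auto
        have th: "x i \<ge> t" if "k \<le> i" "i < m" for i unfolding t_def using sorted[of "k - 1" i] that by auto
        have "(\<Sum>i<m. w i * x i) = (\<Sum>i<m. w i * t) + (\<Sum>i<m. w i * (x i - t))"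
          by (subst sum.distrib[symmetric]) (simp add: algebra_simps)
        also have "(\<Sum>i<m. w i * (x i - t)) = (\<Sum>i<k. w i * (x i - t)) + (\<Sum>i\<in>{k..<m}. w i * (x i - t))"
          by (rule splitm)
        finally have eq: "(\<Sum>i<m. w i * x i) = t * (\<Sum>i<m. w i) + (\<Sum>i<k. w i * (x i - t)) + (\<Sum>i\<in>{k..<m}. w i * (x i - t))"
          by (simp add: sum_distrib_left mult.commute)
        have a1: "t * (\<Sum>i<m. w i) \<ge> t * real k" using wsum kC t0 by (simp add: mult_left_mono_neg)
        have a2: "(\<Sum>i<k. w i * (x i - t)) \<ge> (\<Sum>i<k. (x i - t))"
        proof (rule sum_mono)
          fix i assume "i \<in> {..<k}"
          then have i: "i < k" "i < m" using km by auto
          have "(1 - w i) * (x i - t) \<le> 0" using tl[OF i(1)] w01[OF i(2)] by (simp add: mult_nonneg_nonpos)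
          then show "x i - t \<le> w i * (x i - t)" by (simp add: algebra_simps)
        qed
        have a3: "(\<Sum>i\<in>{k..<m}. w i * (x i - t)) \<ge> 0"
          by (rule sum_nonneg) (use th w01 in auto)
        have "(\<Sum>i<k. (x i - t)) = (\<Sum>i<k. x i) - t * real k" by (simp add: sum_subtractf mult.commute)
        then have "(\<Sum>i<k. x i) \<le> (\<Sum>i<m. w i * x i)" using eq a1 a2 a3 by linarith
        then show ?thesis using km by blast
      qed
    qed
  qed
qed

lemma sum_shift1: "(\<Sum>i=1..k. f (i - 1)) = (\<Sum>i<k. (f i :: real))" for f :: "nat \<Rightarrow> real" and k :: nat
  by (induct k) auto

lemma comb:
  fixes es :: "real list" and w :: "nat \<Rightarrow> real"
  assumes so: "sorted es" and len: "length es = n" and n: "n \<ge> 1"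
    and w01: "\<forall>i<n. 0 \<le> w i \<and> w i \<le> 1" and wt: "w (n - 1) = 1"
    and ws: "(\<Sum>i<n. w i) \<le> real c" and wm: "(\<Sum>i<n. w i * es ! i) = 0"
  shows "\<exists>k\<le>n. k \<le> c - 1 \<and> 0 \<ge> last es + (\<Sum>i=1..k. es ! (i - 1))"
proof -
  define m where "m = n - 1"
  have nm: "n = Suc m" using n unfolding m_def by simp
  have s1: "(\<Sum>i<m. w i) \<le> real (c - 1)"
  proof -
    have "(\<Sum>i<n. w i) = (\<Sum>i<m. w i) + 1" using wt nm by simp
    then have "(\<Sum>i<m. w i) + 1 \<le> real c" using ws by simp
    moreover have "c \<ge> 1"
    proof -
      have "(\<Sum>i<m. w i) \<ge> 0" using w01 nm by (auto intro!: sum_nonneg)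
      then show ?thesis using \<open>(\<Sum>i<m. w i) + 1 \<le> real c\<close> by linarith
    qed
    ultimately show ?thesis by (simp add: of_nat_diff)
  qed
  have s2: "(\<Sum>i<m. w i * es ! i) = - es ! m"
    using wm wt nm by simp
  have sorted': "es ! i \<le> es ! j" if "i \<le> j" "j < m" for i j
    using so that len nm by (simp add: sorted_nth_mono)
  obtain k where k: "k \<le> c - 1" "k \<le> m" "(\<Sum>i<k. es ! i) \<le> (\<Sum>i<m. w i * es ! i)"
    using comb0[of m "\<lambda>i. es ! i" w "c - 1"] sorted' w01 nm s1 by auto
  have ne: "es \<noteq> []" using len nm by auto
  have last: "last es = es ! m" using len nm ne by (simp add: last_conv_nth)
  have sh: "(\<Sum>i=1..k. es ! (i - 1)) = (\<Sum>i<k. es ! i)" by (rule sum_shift1)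
  have fin: "0 \<ge> last es + (\<Sum>i=1..k. es ! (i - 1))" unfolding sh last using k(3) s2 by linarith
  have kn: "k \<le> n" using k nm by simp
  show ?thesis using fin kn k(1) by blast
qed



lemma classical_colorable:
  assumes sg: "simple_graph n E"
  shows "quantum_colorable n E n"
proof -
  define P where "P v k = (if k = v then 1\<^sub>m 1 else 0\<^sub>m 1 1 :: complex mat)" for v k :: nat
  have PC: "P v k \<in> carrier_mat 1 1" for v k unfolding P_def by auto
  have adj0: "mat_adjoint (0\<^sub>m 1 1 :: complex mat) = 0\<^sub>m 1 1" by (rule eq_matI) auto
  have orth: "orth_projector 1 (P v k)" for v k
    unfolding orth_projector_def P_def using adj0 by auto
  have sum1: "foldr (\<lambda>k M. P v k + M) [0..<n] (0\<^sub>m 1 1) = 1\<^sub>m 1" if v: "v < n" for v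
  proof -
    have fs: "foldr (\<lambda>k M. P v k + M) [0..<n] (0\<^sub>m 1 1) \<in> carrier_mat 1 1 \<and>
      (\<forall>s<1. \<forall>s'<1. foldr (\<lambda>k M. P v k + M) [0..<n] (0\<^sub>m 1 1) $$ (s,s') = (\<Sum>k\<leftarrow>[0..<n]. P v k $$ (s,s')) + (0\<^sub>m 1 1) $$ (s,s'))"
      by (rule foldr_sum_entries) (use PC in auto)
    have "(\<Sum>k\<leftarrow>[0..<n]. P v k $$ (0,0)) = (\<Sum>k<n. P v k $$ (0,0))"
      by (simp add: sum_set_upt_conv_sum_list_nat[symmetric] atLeast0LessThan)
    also have "\<dots> = (\<Sum>k<n. if k = v then 1 else 0)" unfolding P_def by (intro sum.cong) auto
    also have "\<dots> = 1" using v by simp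
    finally have "foldr (\<lambda>k M. P v k + M) [0..<n] (0\<^sub>m 1 1) $$ (0,0) = 1" using fs by simp
    then show ?thesis using fs by (intro eq_matI) auto
  qed
  have edge: "P v k * P w k = 0\<^sub>m 1 1" if "E v w" for v w k
  proof -
    have "v \<noteq> w" using sg that unfolding simple_graph_def by auto
    then have "k \<noteq> v \<or> k \<noteq> w" by auto
    then show ?thesis unfolding P_def by auto
  qed
  have "quantum_coloring n E n 1 P"
    unfolding quantum_coloring_def using orth sum1 edge by auto
  then show ?thesis unfolding quantum_colorable_def by auto
qed

theorem theorem2:
  fixes n :: nat and E :: "nat \<Rightarrow> nat \<Rightarrow> bool" and \<kappa> :: nat
  assumes "n \<ge> 1"
    and "simple_graph n E"
    and "connected_graph n E"
    and "\<kappa> = (LEAST k. k \<le> n \<and>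
            0 \<ge> mu_max (adjacency_matrix n E)
                 + (\<Sum>i=1..k. eigenvalues_asc (adjacency_matrix n E) ! (i - 1)))"
  shows "quantum_chromatic_number n E \<ge> 1 + \<kappa>"
proof -
  note n1 = assms(1) and sg = assms(2) and kap = assms(4)
  define A where "A = adjacency_matrix n E"
  define es where "es = eigenvalues_asc A"
  obtain \<phi> where
    on: "\<forall>i<n. \<forall>j<n. (\<Sum>u<n. cnj (\<phi> i u) * \<phi> j u) = (if i = j then 1 else 0)"
    and cpl: "\<forall>u<n. \<forall>w<n. (\<Sum>i<n. \<phi> i u * cnj (\<phi> i w)) = (if u = w then 1 else 0)"
    and spec: "\<forall>u<n. \<forall>w<n. (if E u w then 1 else 0 :: complex) =
          (\<Sum>i<n. complex_of_real (es ! i) * \<phi> i u * cnj (\<phi> i w))"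
    and len: "length es = n" and so: "sorted es"
    using adj_spectral[OF sg] unfolding A_def[symmetric] es_def[symmetric] by blast
  have unit: "\<forall>i<n. (\<Sum>u<n. (cmod (\<phi> i u))^2) = 1"
  proof (intro allI impI)
    fix i assume i: "i < n"
    have "complex_of_real (\<Sum>u<n. (cmod (\<phi> i u))^2) = (\<Sum>u<n. cnj (\<phi> i u) * \<phi> i u)"
      by (simp add: cmod_sq2)
    also have "\<dots> = 1" using on i by simp
    finally show "(\<Sum>u<n. (cmod (\<phi> i u))^2) = 1" by (simp only: of_real_eq_1_iff)
  qed
  define c where "c = quantum_chromatic_number n E"
  have colc: "quantum_colorable n E c"
    unfolding c_def quantum_chromatic_number_def by (rule LeastI[where P="\<lambda>c. quantum_colorable n E c", OF classical_colorable[OF sg]])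
  then obtain d P where d: "d > 0" and qc: "quantum_coloring n E c d P"
    unfolding quantum_colorable_def by blast
  have proj: "\<And>u k. u < n \<Longrightarrow> k < c \<Longrightarrow> orth_projector d (P u k)"
    and sumI: "\<And>u. u < n \<Longrightarrow> foldr (\<lambda>k M. P u k + M) [0..<c] (0\<^sub>m d d) = 1\<^sub>m d"
    and edge0: "\<And>u w k. E u w \<Longrightarrow> k < c \<Longrightarrow> P u k * P w k = 0\<^sub>m d d"
    using qc unfolding quantum_coloring_def by auto
  have PC: "P u k \<in> carrier_mat d d" if "u < n" "k < c" for u k
    using proj[OF that] unfolding orth_projector_def by auto
  define p where "p u k s r = P u k $$ (s,r)" for u k s r
  have herm: "\<forall>u<n. \<forall>k<c. \<forall>s<d. \<forall>r<d. cnj (p u k s r) = p u k r s"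
  proof (intro allI impI)
    fix u k s r assume u: "u < n" and k: "k < c" and s: "s < d" and r: "r < d"
    have "mat_adjoint (P u k) = P u k" using proj[OF u k] unfolding orth_projector_def by auto
    then have "P u k $$ (r,s) = mat_adjoint (P u k) $$ (r,s)" by simp
    also have "\<dots> = cnj (P u k $$ (s,r))" using PC[OF u k] r s by simp
    finally show "cnj (p u k s r) = p u k r s" unfolding p_def by simp
  qed
  have idem: "\<forall>u<n. \<forall>k<c. \<forall>s<d. \<forall>s'<d. (\<Sum>r<d. p u k s r * p u k r s') = p u k s s'"
  proof (intro allI impI)
    fix u k s s' assume u: "u < n" and k: "k < c" and s: "s < d" and s': "s' < d"
    have "P u k * P u k = P u k" using proj[OF u k] unfolding orth_projector_def by auto
    then have "(P u k * P u k) $$ (s,s') = P u k $$ (s,s')" by simp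
    then show "(\<Sum>r<d. p u k s r * p u k r s') = p u k s s'"
      unfolding p_def using mult_idx[OF PC[OF u k] PC[OF u k] s s'] by simp
  qed
  have sm: "\<forall>u<n. \<forall>s<d. \<forall>s'<d. (\<Sum>k<c. p u k s s') = (if s = s' then 1 else 0)"
    unfolding p_def using coloring_sum PC sumI by blast
  define a where "a u w = (if E u w then 1 else 0 :: complex)" for u w
  have edge: "\<forall>u<n. \<forall>w<n. a u w \<noteq> 0 \<longrightarrow> (\<forall>k<c. \<forall>s<d. \<forall>s'<d. (\<Sum>r<d. p u k s r * p w k r s') = 0)"
  proof (intro allI impI)
    fix u w k s s' assume u: "u < n" and w: "w < n" and a: "a u w \<noteq> 0" and k: "k < c" and s: "s < d" and s': "s' < d"
    have "E u w" using a unfolding a_def by (auto split: if_splits)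
    then have "(P u k * P w k) $$ (s,s') = 0" using edge0 k s s' by simp
    then show "(\<Sum>r<d. p u k s r * p w k r s') = 0"
      unfolding p_def using mult_idx[OF PC[OF u k] PC[OF w k] s s'] by simp
  qed
  define t where "t = n - 1"
  have t: "t < n" unfolding t_def using n1 by simp
  have vunit: "(\<Sum>u<n. (cmod (\<phi> t u))^2) = 1" using unit t by simp
  obtain J and g :: "nat \<times> nat \<Rightarrow> nat \<times> nat \<Rightarrow> complex" where
    finJ: "finite J" and cardJ: "card J \<le> c * d"
    and gon: "\<forall>x\<in>J. \<forall>y\<in>J. ipI ({..<n} \<times> {..<d}) (g x) (g y) = (if x = y then 1 else 0)"
    and gA: "\<forall>x\<in>J. (\<Sum>s<d. \<Sum>u<n. \<Sum>w<n. cnj (g x (u,s)) * a u w * g x (w,s)) = 0"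
    and gv: "\<forall>s<d. (\<Sum>x\<in>J. (cmod (\<Sum>u<n. cnj (g x (u,s)) * \<phi> t u))^2) = 1"
    using construct[OF herm idem sm edge vunit] by blast
  have spec': "\<forall>u<n. \<forall>w<n. a u w = (\<Sum>i<n. complex_of_real (es ! i) * \<phi> i u * cnj (\<phi> i w))"
    using spec unfolding a_def by blast
  obtain w where w01: "\<forall>i<n. 0 \<le> w i \<and> w i \<le> 1" and wt: "w t = 1"
    and ws: "(\<Sum>i<n. w i) \<le> real c" and wm: "(\<Sum>i<n. w i * es ! i) = 0"
    using core[OF cpl spec' unit finJ cardJ d t gon gA gv] by blast
  have c1: "c \<ge> 1"
  proof -
    have "w t \<le> (\<Sum>i<n. w i)" using t w01 by (intro member_le_sum) auto
    then show ?thesis using wt ws by linarith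
  qed
  obtain k where k: "k \<le> n" "k \<le> c - 1" and kc: "0 \<ge> last es + (\<Sum>i=1..k. es ! (i - 1))"
    using comb[OF so len n1 w01 wt[unfolded t_def] ws wm] by blast
  have "\<kappa> \<le> k"
    unfolding kap by (rule Least_le) (use k kc in \<open>simp add: mu_max_def A_def[symmetric] es_def[symmetric]\<close>)
  then show ?thesis using k c1 unfolding c_def[symmetric] by linarith
qed


end
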